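(* Let $p=p(n)$ satisfy $n^{-\frac{e-2}{3e-2}+\varepsilon}\leq p=o(1)$ for some constant $\varepsilon>0$. For real $k$ define $$\gamma(k)= -\tfrac{1}{2}\ln (2\pi) +k\ln n + k - \tfrac{5}{2} \ln k + (k-1) \ln \frac{p}{1-p} - \binom{k}{2} \ln \frac{1}{1-p},\qquad \binom k2=\frac{k(k-1)}2 .$$ Then, for all sufficiently large $n$, the equation $\gamma(k)=0$ has a unique solution $\hat k=\hat k(n)$ with $1\ll \hat k = o(\sqrt n)$, and $$\hat{k}=2\log_{1/(1-p)}(enp)+ \frac{3\ln p}{2\ln(np)} + 3 + o(1).$$ Moreover, for integers $k$ with $1\ll k\ll\sqrt n$, one has $\mathbb{E}X_k=(1+o(1))e^{\gamma(k)}$.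
   Context: $G(n,p)$ is the binomial random graph on $[n]$ (each pair an edge independently with probability $p$). $X_k$ denotes the number of $k$-element subsets $U\subseteq[n]$ whose induced subgraph in $G(n,p)$ is a tree; thus $\mathbb{E}X_k=\binom nk k^{k-2}p^{k-1}(1-p)^{\binom k2-k+1}$. *)

theory Defs
  imports "HOL-Analysis.Analysis"
begin

text \<open>Expected number of k-subsets of [n] inducing a tree in G(n,p),
  given explicitly by the (Cayley) formula stated in the context:
  binom(n,k) k^(k-2) p^(k-1) (1-p)^(binom(k,2)-k+1).\<close>
definition EX_trees :: "nat \<Rightarrow> real \<Rightarrow> nat \<Rightarrow> real" where
  "EX_trees n p k = real (n choose k) * real k powr (real k - 2) * p ^ (k - 1)
      * (1 - p) powr (real (k choose 2) - real k + 1)"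

definition gam :: "nat \<Rightarrow> real \<Rightarrow> real \<Rightarrow> real" where
  "gam n p k = - ln (2 * pi) / 2 + k * ln (real n) + k - 5 / 2 * ln k
      + (k - 1) * ln (p / (1 - p)) - (k * (k - 1) / 2) * ln (1 / (1 - p))"

end

theory Submission
  imports Defs "HOL-Real_Asymp.Real_Asymp"
begin

definition sd :: "nat \<Rightarrow> real" where
  "sd n = ln (fact n) - (real n + 1/2) * ln (real n) + real n"

lemma sd_step:
  assumes "n \<ge> 1"
  shows "sd (Suc n) - sd n = 1 - (real n + 1/2) * ln (1 + 1 / real n)"
proof -
  have n0: "real n > 0" using assms by simp
  have f1: "ln (fact (Suc n) :: real) = ln (fact n) + ln (real n + 1)"
    by (simp add: ln_mult add.commute)
  have f2: "ln (1 + 1 / real n) = ln (real n + 1) - ln (real n)"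
  proof -
    have "1 + 1 / real n = (real n + 1) / real n" using n0 by (simp add: field_simps)
    then show ?thesis using n0 by (simp add: ln_div)
  qed
  show ?thesis unfolding sd_def f2 f1 of_nat_Suc by (simp add: algebra_simps)
qed

lemma sd_convergent: "convergent sd"
proof -
  define g where "g n = sd (Suc n) - sd n" for n
  have lim: "(\<lambda>n::nat. real n ^ 2 * ((real n + 1/2) * ln (1 + 1 / real n) - 1)) \<longlonglongrightarrow> 1/12"
    by real_asymp
  then have ev: "\<forall>\<^sub>F n in sequentially. dist (real n ^ 2 * ((real n + 1/2) * ln (1 + 1 / real n) - 1)) (1/12) < 1"
    by (rule tendstoD) simp
  have "\<forall>\<^sub>F n in sequentially. norm (g n) \<le> 2 * inverse (real n ^ 2)"
    using ev eventually_ge_at_top[of "1::nat"]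
  proof eventually_elim
    case (elim n)
    define h where "h = (real n + 1/2) * ln (1 + 1 / real n) - 1"
    have n0: "real n > 0" using elim by simp
    have "\<bar>real n ^ 2 * h\<bar> \<le> 2" using elim(1) unfolding h_def dist_real_def by linarith
    then have "\<bar>h\<bar> * real n ^ 2 \<le> 2" by (simp add: abs_mult mult.commute)
    then have "\<bar>h\<bar> \<le> 2 / real n ^ 2" using n0 by (simp add: field_simps)
    moreover have "g n = - h" unfolding g_def h_def using sd_step[OF elim(2)] by simp
    ultimately show ?case by (simp add: field_simps)
  qed
  moreover have "summable (\<lambda>n. 2 * inverse (real n ^ 2))"
    using inverse_power_summable[of 2, where 'a=real] by (intro summable_mult) simp
  ultimately have "summable g" by (rule summable_comparison_test_ev)
  then have "(\<lambda>n. \<Sum>i<n. g i) \<longlonglongrightarrow> suminf g" by (rule summable_LIMSEQ)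
  moreover have "(\<Sum>i<n. g i) = sd n - sd 0" for n
    unfolding g_def by (rule sum_lessThan_telescope)
  ultimately have "(\<lambda>n. sd n - sd 0) \<longlonglongrightarrow> suminf g" by simp
  then have "(\<lambda>n. sd n - sd 0 + sd 0) \<longlonglongrightarrow> suminf g + sd 0" by (intro tendsto_intros)
  then show ?thesis by (auto simp: convergent_def)
qed

lemma wallis_aux: fixes P F G m :: real assumes "G > 0" "m \<ge> 0"
  shows "P * F^4/(G^2*(2*m+1)) * (4*(m+1)^2/((2*m+1)*(2*m+3))) = 16*P*((m+1)*F)^4/(((2*m+2)*(2*m+1)*G)^2*(2*m+3))"
proof -
  have a: "((2*m+2)*(2*m+1)*G)^2*(2*m+3) = 4*(m+1)^2 * (G^2*(2*m+1)*((2*m+1)*(2*m+3)))"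
    by (simp add: power2_eq_square algebra_simps)
  have b: "16*P*((m+1)*F)^4 = (4*(m+1)^2) * (P*F^4*(4*(m+1)^2))" by (simp add: power2_eq_square power4_eq_xxxx algebra_simps)
  have nz: "4*(m+1)^2 \<noteq> 0" using assms by simp
  show ?thesis unfolding a b using nz by (subst mult_divide_mult_cancel_left[OF nz]) simp
qed

lemma wallis_prod:
  "(\<Prod>k=1..n. 4*real k^2 / (4*real k^2 - 1)) = 2^(4*n) * fact n ^ 4 / (fact (2*n) ^ 2 * (2*real n+1))"
proof (induction n)
  case 0
  then show ?case by simp
next
  case (Suc n)
  have fe: "fact (2 * Suc n) = (2*real n + 2) * (2*real n + 1) * (fact (2*n) :: real)"
    by (simp add: algebra_simps)
  have "(\<Prod>k=1..Suc n. 4*real k^2 / (4*real k^2 - 1)) =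
        (\<Prod>k=1..n. 4*real k^2 / (4*real k^2 - 1)) * (4*real (Suc n)^2 / (4*real (Suc n)^2 - 1))"
    by (simp add: prod.nat_ivl_Suc')
  also have "\<dots> = 2^(4*n) * fact n ^ 4 / (fact (2*n) ^ 2 * (2*real n+1)) * (4*real (Suc n)^2 / (4*real (Suc n)^2 - 1))"
    using Suc by simp
  also have "\<dots> = 2^(4*n) * fact n ^ 4 / (fact (2*n) ^ 2 * (2*real n+1)) * (4*(real n+1)^2/((2*real n+1)*(2*real n+3)))"
    by (simp add: algebra_simps power2_eq_square)
  also have "\<dots> = 16*2^(4*n)*((real n+1)*fact n)^4/(((2*real n+2)*(2*real n+1)*fact (2*n))^2*(2*real n+3))"
    by (rule wallis_aux) simp_all
  also have "\<dots> = 2^(4*Suc n) * fact (Suc n) ^ 4 / (fact (2*Suc n) ^ 2 * (2*real (Suc n)+1))"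
  proof -
    have p: "(2::real)^(4*Suc n) = 16 * 2^(4*n)" by (simp add: power_add)
    have fs: "fact (Suc n) = (real n + 1) * (fact n :: real)" by simp
    have e3: "2*real (Suc n)+1 = 2*real n + 3" by simp
    show ?thesis unfolding p fs fe e3 by (simp add: algebra_simps)
  qed
  finally show ?case .
qed

lemma sd_lim: "sd \<longlonglongrightarrow> ln (2*pi) / 2"
proof -
  obtain C where C: "sd \<longlonglongrightarrow> C" using sd_convergent by (auto simp: convergent_def)
  have C2: "(\<lambda>n. sd (2*n)) \<longlonglongrightarrow> C"
    by (rule filterlim_compose[OF C]) (rule filterlim_subseq, simp add: strict_mono_def)
  have W: "(\<lambda>n. \<Prod>k=1..n. 4*real k^2 / (4*real k^2 - 1)) \<longlonglongrightarrow> pi / 2" by (rule wallis)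
  have lnW: "(\<lambda>n. ln (\<Prod>k=1..n. 4*real k^2 / (4*real k^2 - 1))) \<longlonglongrightarrow> ln (pi / 2)"
    using W by (intro tendsto_intros) auto
  have r: "(\<lambda>n::nat. ln ((2*real n + 1) / real n)) \<longlonglongrightarrow> ln 2" by real_asymp
  have lim2: "(\<lambda>n. 4 * sd n - 2 * sd (2*n) - ln 2 - ln ((2*real n + 1) / real n)) \<longlonglongrightarrow> 4*C - 2*C - ln 2 - ln 2"
    by (intro tendsto_intros C C2 r)
  have eq: "ln (\<Prod>k=1..n. 4*real k^2 / (4*real k^2 - 1)) = 4 * sd n - 2 * sd (2*n) - ln 2 - ln ((2*real n + 1) / real n)"
    if "n \<ge> 1" for n
  proof -
    have n0: "real n > 0" using that by simp
    have fp: "fact n > (0::real)" "fact (2*n) > (0::real)" by simp_all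
    have "ln (\<Prod>k=1..n. 4*real k^2 / (4*real k^2 - 1)) = ln (2^(4*n) * fact n ^ 4 / (fact (2*n) ^ 2 * (2*real n+1)))"
      by (simp only: wallis_prod)
    also have "\<dots> = real (4*n) * ln 2 + 4 * ln (fact n) - 2 * ln (fact (2*n)) - ln (2*real n + 1)"
      using fp n0 by (simp add: ln_mult ln_div ln_realpow)
    also have "ln (fact n) = sd n + (real n + 1/2) * ln (real n) - real n" unfolding sd_def by simp
    also have "ln (fact (2*n)) = sd (2*n) + (real (2*n) + 1/2) * ln (real (2*n)) - real (2*n)" unfolding sd_def by simp
    also have "ln (real (2*n)) = ln 2 + ln (real n)" using n0 by (simp add: ln_mult)
    also have "ln ((2*real n + 1) / real n) = ln (2*real n + 1) - ln (real n)" using n0 by (simp add: ln_div)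
    ultimately show ?thesis by (simp add: algebra_simps)
  qed
  have "(\<lambda>n. ln (\<Prod>k=1..n. 4*real k^2 / (4*real k^2 - 1))) \<longlonglongrightarrow> 4*C - 2*C - ln 2 - ln 2"
  proof (rule Lim_transform_eventually[OF lim2])
    show "\<forall>\<^sub>F n in sequentially. 4 * sd n - 2 * sd (2*n) - ln 2 - ln ((2*real n + 1) / real n) = ln (\<Prod>k=1..n. 4*real k^2 / (4*real k^2 - 1))"
      using eventually_ge_at_top[of "1::nat"] by eventually_elim (rule eq[symmetric])
  qed
  with lnW have "ln (pi/2) = 4*C - 2*C - ln 2 - ln 2" by (rule LIMSEQ_unique)
  moreover have "ln (2*pi) = ln (pi/2) + 2 * ln 2"
  proof -
    have "2*pi = (pi/2) * 2 * 2" by simp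
    then show ?thesis using pi_gt_zero by (simp only: ln_mult) (simp add: ln_mult)
  qed
  ultimately have "C = ln (2*pi)/2" by simp
  with C show ?thesis by simp
qed

lemma choose2_real: "real (k choose 2) = real k * (real k - 1) / 2"
proof (induction k)
  case (Suc k)
  have "Suc k choose 2 = k + (k choose 2)" by (simp add: numeral_2_eq_2)
  then show ?case using Suc by (simp add: field_simps)
qed simp

lemma Q_bounds:
  assumes "k \<le> n" "n \<ge> 1"
  shows "1 - real k ^ 2 / real n \<le> real (n choose k) * fact k / real n ^ k"
    and "real (n choose k) * fact k / real n ^ k \<le> 1"
proof -
  have n0: "real n > 0" using assms by simp
  have eq: "real (n choose k) * fact k / real n ^ k = (\<Prod>i<k. 1 - real i / real n)"
  proof -
    have "real (n choose k) * fact k = (\<Prod>i = 0..<k. real n - real i)"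
      by (simp add: binomial_gbinomial gbinomial_mult_fact')
    then have "real (n choose k) * fact k / real n ^ k = (\<Prod>i<k. real n - real i) / (\<Prod>i<k. real n)"
      by (simp add: lessThan_atLeast0)
    also have "\<dots> = (\<Prod>i<k. (real n - real i) / real n)" by (simp add: prod_dividef)
    also have "\<dots> = (\<Prod>i<k. 1 - real i / real n)" using n0 by (intro prod.cong) (auto simp: field_simps)
    finally show ?thesis .
  qed
  have "(\<Prod>i<k. 1 - real i / real n) \<le> (\<Prod>i<k. 1)"
    by (intro prod_mono) (use n0 assms in \<open>auto simp: field_simps\<close>)
  then show "real (n choose k) * fact k / real n ^ k \<le> 1" using eq by simp
  have "(\<Prod>i<k. 1 - real k / real n) \<le> (\<Prod>i<k. 1 - real i / real n)"
    by (intro prod_mono) (use n0 assms in \<open>auto simp: field_simps\<close>)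
  moreover have "1 + real k * (- (real k / real n)) \<le> (1 + (- (real k / real n))) ^ k"
    by (rule Bernoulli_inequality) (use n0 assms in \<open>auto simp: field_simps\<close>)
  ultimately show "1 - real k ^ 2 / real n \<le> real (n choose k) * fact k / real n ^ k"
    using eq by (simp add: power2_eq_square)
qed

lemma ratio_formula:
  assumes "1 \<le> k" "k \<le> n" "0 < p" "p < 1"
  shows "EX_trees n p k / exp (gam n p (real k)) =
         (real (n choose k) * fact k / real n ^ k) * exp (ln (2*pi)/2 - sd k)"
proof -
  have n0: "real n > 0" and k0: "real k > 0" using assms by auto
  have nck: "real (n choose k) > 0" using assms by simp
  define Q where "Q = real (n choose k) * fact k / real n ^ k"
  have Q0: "Q > 0" unfolding Q_def using nck n0 by simp
  have EXpos: "EX_trees n p k > 0" unfolding EX_trees_def using nck k0 assms by simp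
  have lnEX: "ln (EX_trees n p k) = ln (real (n choose k)) + (real k - 2) * ln (real k)
      + (real k - 1) * ln p + (real k * (real k - 1) / 2 - real k + 1) * ln (1 - p)"
    unfolding EX_trees_def using nck k0 assms
    by (simp add: ln_mult ln_powr ln_realpow of_nat_diff choose2_real)
  have lnQ: "ln Q = ln (real (n choose k)) + ln (fact k) - real k * ln (real n)"
    unfolding Q_def using nck n0 by (simp add: ln_mult ln_div ln_realpow)
  have lnf: "ln (fact k) = sd k + (real k + 1/2) * ln (real k) - real k" unfolding sd_def by simp
  have l1p: "ln (1 / (1 - p)) = - ln (1 - p)" using assms by (simp add: ln_div)
  have lpp: "ln (p / (1 - p)) = ln p - ln (1 - p)" using assms by (simp add: ln_div)
  have "ln (EX_trees n p k) - gam n p (real k) = ln Q + ln (2*pi)/2 - sd k"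
    unfolding lnEX lnQ gam_def l1p lpp lnf apply (simp add: algebra_simps) by (simp add: field_simps)
  then have "EX_trees n p k / exp (gam n p (real k)) = exp (ln Q + ln (2*pi)/2 - sd k)"
  proof -
    have "EX_trees n p k / exp (gam n p (real k)) = exp (ln (EX_trees n p k) - gam n p (real k))"
      using EXpos by (simp add: exp_diff)
    then show ?thesis using \<open>ln (EX_trees n p k) - gam n p (real k) = ln Q + ln (2*pi)/2 - sd k\<close> by simp
  qed
  also have "\<dots> = Q * exp (ln (2*pi)/2 - sd k)" using Q0 by (simp add: exp_add exp_diff)
  finally show ?thesis unfolding Q_def .
qed

lemma part2:
  fixes p :: "nat \<Rightarrow> real"
  assumes pev: "\<forall>\<^sub>F n in sequentially. 0 < p n \<and> p n < 1"
    and k: "filterlim k at_top sequentially" "(\<lambda>n. real (k n) / sqrt (real n)) \<longlonglongrightarrow> 0"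
  shows "(\<lambda>n. EX_trees n (p n) (k n) / exp (gam n (p n) (real (k n)))) \<longlonglongrightarrow> 1"
proof -
  have sq: "(\<lambda>n. (real (k n) / sqrt (real n))^2) \<longlonglongrightarrow> 0" using tendsto_power[OF k(2), of 2] by simp
  have ev1: "\<forall>\<^sub>F n in sequentially. real (k n) / sqrt (real n) < 1"
    using order_tendstoD(2)[OF k(2), of 1] by simp
  have evk: "\<forall>\<^sub>F n in sequentially. 1 \<le> k n" using k(1) by (simp add: filterlim_at_top)
  have good: "\<forall>\<^sub>F n in sequentially. 1 \<le> k n \<and> k n \<le> n \<and> n \<ge> 1 \<and> 0 < p n \<and> p n < 1
        \<and> (real (k n) / sqrt (real n))^2 = real (k n)^2 / real n"
    using ev1 evk pev eventually_ge_at_top[of "1::nat"]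
  proof eventually_elim
    case (elim n)
    have n0: "real n \<ge> 1" using elim by simp
    have "real (k n) < sqrt (real n)" using elim(1) n0 by (simp add: field_simps)
    also have "sqrt (real n) \<le> real n" 
    proof -
      have "sqrt (real n) * 1 \<le> sqrt (real n) * sqrt (real n)" using n0 by (intro mult_left_mono) auto
      then show ?thesis using n0 by simp
    qed
    finally have "k n \<le> n" by simp
    then show ?case using elim n0 by (simp add: power_divide)
  qed
  define Q where "Q n = real (n choose k n) * fact (k n) / real n ^ k n" for n
  have Qlim: "Q \<longlonglongrightarrow> 1"
  proof (rule tendsto_sandwich)
    show "\<forall>\<^sub>F n in sequentially. 1 - (real (k n) / sqrt (real n))^2 \<le> Q n"
      using good by eventually_elim (use Q_bounds(1) in \<open>auto simp: Q_def\<close>)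
    show "\<forall>\<^sub>F n in sequentially. Q n \<le> 1"
      using good by eventually_elim (use Q_bounds(2) in \<open>auto simp: Q_def\<close>)
    show "(\<lambda>n. 1 - (real (k n) / sqrt (real n))^2) \<longlonglongrightarrow> 1" using tendsto_diff[OF tendsto_const sq, of 1] by simp
  qed simp
  have sdk: "(\<lambda>n. sd (k n)) \<longlonglongrightarrow> ln (2*pi)/2" by (rule filterlim_compose[OF sd_lim k(1)])
  have "(\<lambda>n. Q n * exp (ln (2*pi)/2 - sd (k n))) \<longlonglongrightarrow> 1 * exp (ln (2*pi)/2 - ln (2*pi)/2)"
    by (intro tendsto_intros Qlim sdk)
  then have lim: "(\<lambda>n. Q n * exp (ln (2*pi)/2 - sd (k n))) \<longlonglongrightarrow> 1" by simp
  show ?thesis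
  proof (rule Lim_transform_eventually[OF lim])
    show "\<forall>\<^sub>F n in sequentially. Q n * exp (ln (2*pi)/2 - sd (k n)) = EX_trees n (p n) (k n) / exp (gam n (p n) (real (k n)))"
      using good by eventually_elim (simp add: ratio_formula Q_def)
  qed
qed

definition LL :: "real \<Rightarrow> real" where "LL p = - ln (1 - p)"
definition AA :: "nat \<Rightarrow> real \<Rightarrow> real" where "AA n p = 1 + ln (real n) + ln p"

lemma LL_ge: "0 \<le> p \<Longrightarrow> p < 1 \<Longrightarrow> p \<le> LL p"
  unfolding LL_def using ln_one_minus_pos_upper_bound[of p] by simp

lemma gam_alt:
  assumes "0 < p" "p < 1"
  shows "gam n p k = - ln (2*pi)/2 + k * (AA n p + LL p) - (ln p + LL p) - 5/2 * ln k - k*(k-1)/2 * LL p"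
proof -
  have "ln (p / (1 - p)) = ln p + LL p" using assms by (simp add: ln_div LL_def)
  moreover have "ln (1 / (1 - p)) = LL p" using assms by (simp add: ln_div LL_def)
  ultimately show ?thesis unfolding gam_def AA_def by (simp add: algebra_simps)
qed

lemma gam_shift:
  assumes "0 < p" "p < 1"
  shows "gam n p (2 * AA n p / LL p + x) = AA n p * (3 - x)
     + (- (x * x) * LL p / 2 + 3 * x * LL p / 2 - LL p - ln p - 5/2 * ln (2 * AA n p / LL p + x) - ln (2*pi)/2)"
proof -
  have L0: "LL p > 0" using LL_ge[of p] assms by simp
  show ?thesis unfolding gam_alt[OF assms] using L0
    by (simp add: field_simps power2_eq_square)
qed

lemma pos_region:
  assumes "0 < p" "p < 1" "5 \<le> AA n p + LL p" "0 < - ln (2*pi)/2 - ln p - LL p"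
    "1 \<le> k" "k \<le> (AA n p + LL p) / LL p + 1/2"
  shows "gam n p k > 0"
proof -
  define a where "a = AA n p + LL p"
  define L where "L = LL p"
  have L0: "L > 0" using LL_ge[of p] assms unfolding L_def by simp
  have "(k - 1) * L \<le> (a / L - 1/2) * L" using assms(6) L0 unfolding a_def L_def
    by (intro mult_right_mono) auto
  also have "\<dots> = a - L/2" using L0 by (simp add: field_simps)
  finally have "(k-1) * L \<le> a" using L0 by simp
  then have "k * ((k-1) * L) \<le> k * a" using assms(5) by (intro mult_left_mono) auto
  then have kk: "k*(k-1)/2 * L \<le> k * a / 2" by (simp add: algebra_simps)
  have lk: "ln k < k" using assms(5) by (intro ln_less_self) simp
  have "5/2 * ln k \<le> k * a / 2"
  proof -
    have "5/2 * ln k \<le> 5/2 * k" using lk by simp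
    also have "\<dots> \<le> k * a / 2"
    proof -
      have "k * 5 \<le> k * a" using assms(3,5) unfolding a_def by (intro mult_left_mono) auto
      then show ?thesis by simp
    qed
    finally show ?thesis .
  qed
  then show ?thesis unfolding gam_alt[OF assms(1,2)] using kk assms(4) unfolding a_def L_def by linarith
qed

lemma decr_region:
  assumes "0 < p" "p < 1" "(AA n p + LL p) / LL p + 1/2 \<le> k1" "k1 < k2" "1 \<le> k1"
  shows "gam n p k2 < gam n p k1"
proof -
  define a where "a = AA n p + LL p"
  define L where "L = LL p"
  have L0: "L > 0" using LL_ge[of p] assms unfolding L_def by simp
  have "a \<le> (k1 - 1/2) * L"
  proof -
    have "a / L \<le> k1 - 1/2" using assms(3) unfolding a_def L_def by simp
    then show ?thesis using L0 by (simp add: divide_le_eq)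
  qed
  moreover have "L * (k2 - k1) > 0" using L0 assms(4) by simp
  moreover have "L * (k1 + k2 - 1) / 2 = (k1 - 1/2) * L + L * (k2 - k1) / 2" by (simp add: field_simps)
  ultimately have neg: "a - L * (k1 + k2 - 1) / 2 < 0" by linarith
  have diff: "gam n p k2 - gam n p k1 = (k2 - k1) * (a - L * (k1 + k2 - 1) / 2) - 5/2 * (ln k2 - ln k1)"
    unfolding gam_alt[OF assms(1,2)] a_def L_def by (simp add: field_simps)
  have "(k2 - k1) * (a - L * (k1 + k2 - 1) / 2) < 0" using neg assms(4) by (simp add: mult_pos_neg)
  moreover have "ln k1 < ln k2" using assms(4,5) by simp
  then have "5/2 * (ln k2 - ln k1) > 0" by simp
  ultimately show ?thesis using diff by linarith
qed

lemma unique_root: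
  assumes "0 < p" "p < 1" "5 \<le> AA n p + LL p" "0 < - ln (2*pi)/2 - ln p - LL p"
    "1 \<le> k1" "1 \<le> k2" "gam n p k1 = 0" "gam n p k2 = 0"
  shows "k1 = k2"
proof -
  have big: "(AA n p + LL p) / LL p + 1/2 \<le> k" if "1 \<le> k" "gam n p k = 0" for k
  proof (rule ccontr)
    assume "\<not> ?thesis"
    then have "gam n p k > 0" using pos_region[OF assms(1-4) that(1)] by simp
    with that show False by simp
  qed
  show ?thesis
  proof (rule ccontr)
    assume ne: "k1 \<noteq> k2"
    show False
    proof (cases "k1 < k2")
      case True
      then show False using decr_region[OF assms(1,2) big[OF assms(5,7)] True assms(5)] assms(7,8) by simp
    next
      case False
      then have "k2 < k1" using ne by simp
      have "gam n p k1 < gam n p k2" by (rule decr_region[OF assms(1,2) big[OF assms(6,8)] \<open>k2 < k1\<close> assms(6)])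
      then show False using assms(7,8) by simp
    qed
  qed
qed

lemma asym:
  fixes p :: "nat \<Rightarrow> real" and \<eta> :: real
  assumes p0: "p \<longlonglongrightarrow> 0"
    and low: "\<forall>\<^sub>F n in sequentially. real n powr (-1/4) \<le> p n"
    and pos: "\<forall>\<^sub>F n in sequentially. 0 < p n \<and> p n < 1"
    and eta: "\<bar>\<eta>\<bar> \<le> 1"
  shows "(\<lambda>n. gam n (p n) (2 * AA n (p n) / LL (p n) + 3 + 3 * ln (p n) / (2 * ln (real n * p n)) + \<eta>)
             / AA n (p n)) \<longlonglongrightarrow> - \<eta>"
proof -
  define A where "A n = AA n (p n)" for n
  define L where "L n = LL (p n)" for n
  define s where "s n = 3 * ln (p n) / (2 * ln (real n * p n))" for n
  define x where "x n = 3 + s n + \<eta>" for n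
  define k where "k n = 2 * A n / L n + x n" for n
  have good: "\<forall>\<^sub>F n in sequentially. 2 \<le> n \<and> 0 < p n \<and> p n < 1 \<and> real n powr (-1/4) \<le> p n"
    using low pos eventually_ge_at_top[of "2::nat"] by eventually_elim auto
  have good2: "\<forall>\<^sub>F n in sequentially. 0 < p n \<and> p n < 1 \<and> 0 < L n \<and> p n \<le> L n
      \<and> 1 + 3/4 * ln (real n) \<le> A n \<and> 1 \<le> A n \<and> -1/2 \<le> s n \<and> s n \<le> 0
      \<and> \<bar>ln (p n)\<bar> \<le> (A n - 1) / 3 \<and> A n = 1 + ln (real n * p n) \<and> 1 < A n"
    using good
  proof eventually_elim
    case (elim n)
    have n2: "real n \<ge> 2" using elim by simp
    have lnn: "ln (real n) > 0" using n2 by simp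
    have lp: "ln (p n) \<ge> -1/4 * ln (real n)"
    proof -
      have "ln (real n powr (-1/4)) \<le> ln (p n)" using elim n2 by (subst ln_le_cancel_iff) auto
      then show ?thesis using n2 by (simp add: ln_powr)
    qed
    have lp0: "ln (p n) < 0" using elim by simp
    have lnp: "ln (real n * p n) = ln (real n) + ln (p n)" using elim n2 by (simp add: ln_mult)
    have Aeq: "A n = 1 + ln (real n * p n)" unfolding A_def AA_def lnp by simp
    have lnp_ge: "ln (real n * p n) \<ge> 3/4 * ln (real n)" using lnp lp by simp
    have lnp_pos: "ln (real n * p n) > 0" using lnp_ge lnn by simp
    have s_le: "s n \<le> 0" unfolding s_def using lp0 lnp_pos by (simp add: divide_nonpos_pos)
    have s_ge: "-1/2 \<le> s n"
    proof -
      have "- (3 * ln (p n)) \<le> 3/4 * ln (real n)" using lp by simp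
      also have "\<dots> \<le> ln (real n * p n)" using lnp_ge by simp
      finally have "- (3 * ln (p n)) \<le> ln (real n * p n)" .
      then show ?thesis unfolding s_def using lnp_pos by (simp add: le_divide_eq)
    qed
    have abslp: "\<bar>ln (p n)\<bar> \<le> (A n - 1) / 3" using lp lp0 lnp_ge Aeq by simp
    have L: "p n \<le> L n" unfolding L_def using LL_ge[of "p n"] elim by simp
    have A1: "1 + 3/4 * ln (real n) \<le> A n" using Aeq lnp_ge by linarith
    have A2: "1 \<le> A n" using Aeq lnp_pos by linarith
    have L0: "0 < L n" using L elim by linarith
    have A3: "1 < A n" using Aeq lnp_pos by linarith
    show ?case using elim L s_le s_ge abslp Aeq A1 A2 A3 L0 by (intro conjI) linarith+
  qed
  have Alim: "filterlim A at_top sequentially"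
  proof (rule filterlim_at_top_mono)
    show "filterlim (\<lambda>n::nat. 1 + 3/4 * ln (real n)) at_top sequentially" by real_asymp
    show "\<forall>\<^sub>F n in sequentially. 1 + 3/4 * ln (real n) \<le> A n" using good2 by eventually_elim auto
  qed
  have iA: "(\<lambda>n. inverse (A n)) \<longlonglongrightarrow> 0" by (rule tendsto_inverse_0_at_top[OF Alim])
  have pR: "filterlim p (at_right 0) sequentially"
    by (rule tendsto_imp_filterlim_at_right[OF p0]) (use pos in \<open>auto elim: eventually_mono\<close>)
  have fl: "((\<lambda>y::real. - ln (1 - y) / y) \<longlongrightarrow> 1) (at_right 0)" by real_asymp
  have Lp: "(\<lambda>n. L n / p n) \<longlonglongrightarrow> 1"
    using filterlim_compose[OF fl pR] unfolding L_def LL_def by simp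
  have "(\<lambda>n. L n / p n * p n) \<longlonglongrightarrow> 1 * 0" by (intro tendsto_intros Lp p0)
  then have "(\<lambda>n. L n / p n * p n) \<longlonglongrightarrow> 0" by simp
  then have L0: "L \<longlonglongrightarrow> 0"
    by (rule Lim_transform_eventually) (use pos in \<open>auto elim!: eventually_mono\<close>)
  have Lle1: "\<forall>\<^sub>F n in sequentially. L n \<le> 1"
    using order_tendstoD(2)[OF L0, of 1] by (auto elim: eventually_mono)
  have ln2pi: "ln (2*pi) \<le> 7" using ln_le_minus_one[of "2*pi"] pi_less_4 by simp
  have ln2pi0: "ln (2*pi) \<ge> 0" using pi_gt3 by simp
  define T1 where "T1 n = (- (x n * x n) * L n / 2 + 3 * x n * L n / 2 - L n - ln (2*pi)/2) / A n" for n
  define T2 where "T2 n = 3/2 * ln (p n) / A n - s n" for n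
  define T3 where "T3 n = 5/2 * (ln (k n * p n / A n) / A n + ln (A n) / A n)" for n
  have xb: "3/2 \<le> x n \<and> x n \<le> 4" if "-1/2 \<le> s n" "s n \<le> 0" for n
    using that eta unfolding x_def by auto
  have T1lim: "T1 \<longlonglongrightarrow> 0"
  proof (rule tendsto_0_le[OF iA])
    show "\<forall>\<^sub>F n in sequentially. norm (T1 n) \<le> norm (inverse (A n)) * 19"
      using good2 Lle1
    proof eventually_elim
      case (elim n)
      have x: "3/2 \<le> x n" "x n \<le> 4" using xb elim by auto
      have "x n * x n \<le> 4 * 4" using x by (intro mult_mono) auto
      then have f1: "x n * x n * L n \<le> 16 * L n" using elim by (intro mult_right_mono) auto
      have f2: "0 \<le> x n * x n * L n" using x elim by simp
      have f3: "x n * L n \<le> 4 * L n" using x elim by (intro mult_right_mono) auto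
      have f4: "0 \<le> x n * L n" using x elim by simp
      have N: "\<bar>- (x n * x n) * L n / 2 + 3 * x n * L n / 2 - L n - ln (2*pi)/2\<bar> \<le> 19"
      proof -
        have e: "- (x n * x n) * L n / 2 + 3 * x n * L n / 2 - L n - ln (2*pi)/2
           = - (x n * x n * L n) / 2 + 3 * (x n * L n) / 2 - L n - ln (2*pi)/2" by (simp add: algebra_simps)
        have "L n \<le> 1" "0 < L n" using elim by auto
        then show ?thesis unfolding e abs_le_iff using f1 f2 f3 f4 ln2pi ln2pi0 by (intro conjI; linarith)
      qed
      have Apos: "A n > 0" using elim by simp
      show ?case using N Apos unfolding T1_def
        by (simp add: abs_divide divide_le_eq field_simps)
    qed
  qed
  have T2lim: "T2 \<longlonglongrightarrow> 0"
  proof (rule tendsto_0_le[OF iA])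
    show "\<forall>\<^sub>F n in sequentially. norm (T2 n) \<le> norm (inverse (A n)) * (1/2)"
      using good2
    proof eventually_elim
      case (elim n)
      have A1: "A n - 1 > 0" using elim by simp
      have e: "ln (real n * p n) = A n - 1" using elim by linarith
      have sA: "s n = 3/2 * ln (p n) / (A n - 1)" unfolding s_def e by simp
      have hlp: "c / a - c / (a - 1) = - c / (a * (a - 1))" if "a > 1" for a c :: real
        using that by (simp add: field_simps)
      have T2eq: "T2 n = - (3/2 * ln (p n)) / (A n * (A n - 1))"
        unfolding T2_def sA using hlp[of "A n" "3/2 * ln (p n)"] A1 by simp
      have Ap: "A n > 0" using A1 by simp
      have ab: "\<bar>ln (p n)\<bar> \<le> (A n - 1) / 3" using elim by blast
      have "\<bar>T2 n\<bar> = 3/2 * \<bar>ln (p n)\<bar> / (A n * (A n - 1))" unfolding T2eq using A1 Ap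
        by (simp add: abs_divide abs_mult)
      also have "\<dots> \<le> 3/2 * ((A n - 1) / 3) / (A n * (A n - 1))" using A1 Ap ab
        by (intro divide_right_mono mult_left_mono) auto
      also have "\<dots> = inverse (A n) * (1/2)" using A1 Ap by (simp add: field_simps)
      finally show ?case using Ap by simp
    qed
  qed
  have xpA: "(\<lambda>n. x n * p n / A n) \<longlonglongrightarrow> 0"
  proof (rule tendsto_0_le[OF p0])
    show "\<forall>\<^sub>F n in sequentially. norm (x n * p n / A n) \<le> norm (p n) * 4"
      using good2
    proof eventually_elim
      case (elim n)
      have x: "3/2 \<le> x n" "x n \<le> 4" using xb elim by auto
      have "x n * p n / A n \<le> x n * p n / 1" using elim x by (intro divide_left_mono) auto
      also have "\<dots> \<le> 4 * p n" using x elim by (simp add: mult_right_mono)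
      finally show ?case using x elim by (simp add: abs_mult abs_divide)
    qed
  qed
  have pL: "(\<lambda>n. p n / L n) \<longlonglongrightarrow> 1"
    using tendsto_inverse[OF Lp] by simp
  have "(\<lambda>n. 2 * (p n / L n) + x n * p n / A n) \<longlonglongrightarrow> 2 * 1 + 0" by (intro tendsto_intros pL xpA)
  then have "(\<lambda>n. 2 * (p n / L n) + x n * p n / A n) \<longlonglongrightarrow> 2" by simp
  then have kpA: "(\<lambda>n. k n * p n / A n) \<longlonglongrightarrow> 2"
  proof (rule Lim_transform_eventually)
    show "\<forall>\<^sub>F n in sequentially. 2 * (p n / L n) + x n * p n / A n = k n * p n / A n"
      using good2
    proof eventually_elim
      case (elim n)
      have "A n \<noteq> 0" "L n \<noteq> 0" using elim by auto
      then show ?case unfolding k_def by (simp add: field_simps)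
    qed
  qed
  have lnAA: "((\<lambda>y::real. ln y / y) \<longlongrightarrow> 0) at_top" by real_asymp
  have T3lim: "T3 \<longlonglongrightarrow> 0"
  proof -
    have a: "(\<lambda>n. ln (k n * p n / A n)) \<longlonglongrightarrow> ln 2" using tendsto_ln[OF kpA] by simp
    have b: "(\<lambda>n. ln (k n * p n / A n) * inverse (A n)) \<longlonglongrightarrow> ln 2 * 0" by (rule tendsto_mult[OF a iA])
    have c: "(\<lambda>n. ln (A n) / A n) \<longlonglongrightarrow> 0" by (rule filterlim_compose[OF lnAA Alim])
    have "(\<lambda>n. 5/2 * (ln (k n * p n / A n) * inverse (A n) + ln (A n) / A n)) \<longlonglongrightarrow> 5/2 * (ln 2 * 0 + 0)"
      by (rule tendsto_mult_left[OF tendsto_add[OF b c]])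
    then show ?thesis unfolding T3_def divide_inverse by simp
  qed
  have "(\<lambda>n. - \<eta> + (T1 n + T2 n - T3 n)) \<longlonglongrightarrow> - \<eta> + (0 + 0 - 0)"
    by (rule tendsto_add[OF tendsto_const tendsto_diff[OF tendsto_add[OF T1lim T2lim] T3lim]])
  then have lim: "(\<lambda>n. - \<eta> + (T1 n + T2 n - T3 n)) \<longlonglongrightarrow> - \<eta>" by simp
  have ev: 
    "\<forall>\<^sub>F n in sequentially. - \<eta> + (T1 n + T2 n - T3 n) =
      gam n (p n) (2 * AA n (p n) / LL (p n) + 3 + 3 * ln (p n) / (2 * ln (real n * p n)) + \<eta>) / AA n (p n)"
  proof -
    show "\<forall>\<^sub>F n in sequentially. - \<eta> + (T1 n + T2 n - T3 n) =
      gam n (p n) (2 * AA n (p n) / LL (p n) + 3 + 3 * ln (p n) / (2 * ln (real n * p n)) + \<eta>) / AA n (p n)"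
      using good2
    proof eventually_elim
      case (elim n)
      have x: "3/2 \<le> x n" "x n \<le> 4" using xb elim by auto
      have Apos: "A n > 0" using elim by simp
      have kpos: "k n > 0" unfolding k_def using elim x by (simp add: add_pos_pos)
      have karg: "2 * AA n (p n) / LL (p n) + 3 + 3 * ln (p n) / (2 * ln (real n * p n)) + \<eta> = 2 * A n / L n + x n"
        unfolding A_def L_def x_def s_def by simp
      have G: "gam n (p n) (k n) = A n * (3 - x n) + (- (x n * x n) * L n / 2 + 3 * x n * L n / 2 - L n - ln (p n) - 5/2 * ln (k n) - ln (2*pi)/2)"
        unfolding k_def A_def L_def using gam_shift[of "p n" n "x n"] elim by simp
      have lkp: "ln (k n * p n / A n) = ln (k n) + ln (p n) - ln (A n)"
        using kpos Apos elim by (simp add: ln_mult ln_div)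
      have kdef: "k n = 2 * A n / L n + x n" by (simp add: k_def)
      have hl: "- et + ((N / a) + (3/2 * lp / a - s) - 5/2 * ((lk + lp - la) / a + la / a))
          = a * (3 - (3 + s + et)) / a + (N - lp - 5/2 * lk) / a" if "a \<noteq> 0"
        for et N a lp s lk la :: real
        using that by (simp add: field_simps)
      have "gam n (p n) (k n) / A n = - \<eta> + (T1 n + T2 n - T3 n)"
        unfolding G T1_def T2_def T3_def lkp x_def
        using hl[of "A n" \<eta> "- (x n * x n) * L n / 2 + 3 * x n * L n / 2 - L n - ln (2*pi)/2" "ln (p n)" "s n" "ln (k n)" "ln (A n)"] Apos
        by (simp add: add_divide_distrib diff_divide_distrib x_def)
      moreover have "gam n (p n) (2 * AA n (p n) / LL (p n) + 3 + 3 * ln (p n) / (2 * ln (real n * p n)) + \<eta>) = gam n (p n) (k n)"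
        using karg kdef by simp
      moreover have "AA n (p n) = A n" by (simp add: A_def)
      ultimately show ?case by simp
    qed
  qed
  show ?thesis by (rule Lim_transform_eventually[OF lim ev])
qed

lemma gam_isCont: "x > 0 \<Longrightarrow> isCont (gam n p) x"
  unfolding gam_def[abs_def] by (intro continuous_intros) auto

lemma root_exists:
  assumes "0 < a" "a \<le> b" "gam n p b \<le> 0" "0 \<le> gam n p a"
  shows "\<exists>r. a \<le> r \<and> r \<le> b \<and> gam n p r = 0"
  using IVT2[of "gam n p" b 0 a] assms gam_isCont by auto

lemma basics:
  fixes p :: "nat \<Rightarrow> real"
  assumes p0: "p \<longlonglongrightarrow> 0"
    and low: "\<forall>\<^sub>F n in sequentially. real n powr (-1/4) \<le> p n"
    and pos: "\<forall>\<^sub>F n in sequentially. 0 < p n \<and> p n < 1"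
  shows "\<forall>\<^sub>F n in sequentially. 2 \<le> n \<and> 0 < p n \<and> p n < 1 \<and> 0 < LL (p n) \<and> p n \<le> LL (p n)
      \<and> 1 + 3/4 * ln (real n) \<le> AA n (p n) \<and> AA n (p n) \<le> 1 + ln (real n)
      \<and> 3 * ln (p n) / (2 * ln (real n * p n)) \<le> 0
      \<and> -1/2 \<le> 3 * ln (p n) / (2 * ln (real n * p n))
      \<and> ln (exp 1 * real n * p n) = AA n (p n) \<and> 1 / p n \<le> real n powr (1/4)"
  using low pos eventually_ge_at_top[of "2::nat"]
proof eventually_elim
  case (elim n)
  define s where "s = 3 * ln (p n) / (2 * ln (real n * p n))"
  have n2: "real n \<ge> 2" using elim by simp
  have lnn: "ln (real n) > 0" using n2 by simp
  have lp: "ln (p n) \<ge> -1/4 * ln (real n)"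
  proof -
    have "ln (real n powr (-1/4)) \<le> ln (p n)" using elim n2 by (subst ln_le_cancel_iff) auto
    then show ?thesis using n2 by (simp add: ln_powr)
  qed
  have lp0: "ln (p n) < 0" using elim by simp
  have lnp: "ln (real n * p n) = ln (real n) + ln (p n)" using elim n2 by (simp add: ln_mult)
  have Aeq: "AA n (p n) = 1 + ln (real n) + ln (p n)" unfolding AA_def by simp
  have lnp_ge: "ln (real n * p n) \<ge> 3/4 * ln (real n)" using lnp lp by simp
  have lnp_pos: "ln (real n * p n) > 0" using lnp_ge lnn by simp
  have s_le: "s \<le> 0" unfolding s_def using lp0 lnp_pos by (simp add: divide_nonpos_pos)
  have s_ge: "-1/2 \<le> s"
  proof -
    have "- (3 * ln (p n)) \<le> 3/4 * ln (real n)" using lp by simp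
    also have "\<dots> \<le> ln (real n * p n)" using lnp_ge by simp
    finally have "- (3 * ln (p n)) \<le> ln (real n * p n)" .
    then show ?thesis unfolding s_def using lnp_pos by (simp add: le_divide_eq)
  qed
  have L: "p n \<le> LL (p n)" using LL_ge[of "p n"] elim by simp
  have A1: "1 + 3/4 * ln (real n) \<le> AA n (p n)" using Aeq lp by linarith
  have A2: "AA n (p n) \<le> 1 + ln (real n)" using Aeq lp0 by linarith
  have le: "ln (exp 1 * real n * p n) = AA n (p n)" unfolding Aeq using elim n2 by (simp add: ln_mult)
  have ip: "1 / p n \<le> real n powr (1/4)"
  proof -
    have "1 / p n \<le> 1 / real n powr (-1/4)" using elim n2 by (intro divide_left_mono) auto
    also have "\<dots> = real n powr (1/4)"
    proof -
      have "real n powr (-1/4) = inverse (real n powr (1/4))" using powr_minus[of "real n" "1/4"] by simp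
      then show ?thesis by (metis inverse_eq_divide inverse_inverse_eq)
    qed
    finally show ?thesis .
  qed
  have L0: "0 < LL (p n)" using L elim by linarith
  have n2': "2 \<le> n" using elim by blast
  show ?case using elim L L0 A1 A2 le ip s_le s_ge n2' unfolding s_def by blast
qed

lemma LL_le1:
  assumes "0 \<le> p" "p \<le> 1/2"
  shows "LL p \<le> 1"
proof -
  have q: "0 < 1 - p" using assms by simp
  have "LL p = ln (1 / (1 - p))" unfolding LL_def using q by (simp add: ln_div)
  also have "\<dots> \<le> 1 / (1 - p) - 1" using q by (intro ln_le_minus_one) simp
  also have "1 / (1 - p) \<le> 2" using assms q by (simp add: divide_le_eq)
  finally show ?thesis by simp
qed

theorem mainTheorem2:
  fixes p :: "nat \<Rightarrow> real" and \<epsilon> :: real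
  assumes eps: "\<epsilon> > 0"
    and lower: "\<forall>\<^sub>F n in sequentially.
                  real n powr (- (exp 1 - 2) / (3 * exp 1 - 2) + \<epsilon>) \<le> p n"
    and p0: "p \<longlonglongrightarrow> 0"
  shows "(\<exists>khat :: nat \<Rightarrow> real.
           filterlim khat at_top sequentially
         \<and> (\<lambda>n. khat n / sqrt (real n)) \<longlonglongrightarrow> 0
         \<and> (\<forall>\<^sub>F n in sequentially. gam n (p n) (khat n) = 0)
         \<and> (\<forall>k' :: nat \<Rightarrow> real. filterlim k' at_top sequentially
               \<longrightarrow> (\<lambda>n. k' n / sqrt (real n)) \<longlonglongrightarrow> 0
               \<longrightarrow> (\<forall>\<^sub>F n in sequentially. gam n (p n) (k' n) = 0)
               \<longrightarrow> (\<forall>\<^sub>F n in sequentially. k' n = khat n))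
         \<and> (\<lambda>n. khat n - (2 * log (1 / (1 - p n)) (exp 1 * real n * p n)
                  + 3 * ln (p n) / (2 * ln (real n * p n)) + 3)) \<longlonglongrightarrow> 0)
       \<and> (\<forall>k :: nat \<Rightarrow> nat. filterlim k at_top sequentially
           \<longrightarrow> (\<lambda>n. real (k n) / sqrt (real n)) \<longlonglongrightarrow> 0
           \<longrightarrow> (\<lambda>n. EX_trees n (p n) (k n) / exp (gam n (p n) (real (k n)))) \<longlonglongrightarrow> 1)"
proof -
  have e3: "exp 1 \<le> (3::real)" by (rule exp_le)
  have e1: "exp 1 > (1::real)" by simp
  have c14: "(exp 1 - 2) / (3 * exp 1 - 2) \<le> (1/4::real)"
  proof -
    have d: "3 * exp 1 - 2 > (0::real)" using e1 by linarith
    have "4 * (exp 1 - 2) \<le> 1 * (3 * exp 1 - (2::real))" using e3 by (simp add: algebra_simps)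
    then show ?thesis using d by (simp add: divide_le_eq)
  qed
  have expo: "-1/4 \<le> - (exp 1 - 2) / (3 * exp 1 - 2) + \<epsilon>"
  proof -
    have "- (exp 1 - 2) / (3 * exp 1 - 2) = - ((exp 1 - 2) / (3 * exp 1 - (2::real)))" by (simp add: minus_divide_left)
    then show ?thesis using c14 eps by linarith
  qed
  have low4: "\<forall>\<^sub>F n in sequentially. real n powr (-1/4) \<le> p n"
    using lower eventually_ge_at_top[of "1::nat"]
  proof eventually_elim
    case (elim n)
    have "real n powr (-1/4) \<le> real n powr (- (exp 1 - 2) / (3 * exp 1 - 2) + \<epsilon>)"
      using elim expo by (intro powr_mono) auto
    then show ?case using elim by linarith
  qed
  have pos: "\<forall>\<^sub>F n in sequentially. 0 < p n \<and> p n < 1"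
    using low4 eventually_ge_at_top[of "1::nat"] order_tendstoD(2)[OF p0 zero_less_one]
  proof eventually_elim
    case (elim n)
    have "0 < real n powr (-1/4)" using elim by simp
    then show ?case using elim by linarith
  qed
  show ?thesis
  proof (intro conjI allI impI)
    fix k :: "nat \<Rightarrow> nat"
    assume "filterlim k at_top sequentially" "(\<lambda>n. real (k n) / sqrt (real n)) \<longlonglongrightarrow> 0"
    then show "(\<lambda>n. EX_trees n (p n) (k n) / exp (gam n (p n) (real (k n)))) \<longlonglongrightarrow> 1"
      by (rule part2[OF pos])
  next
    show "\<exists>khat :: nat \<Rightarrow> real.
           filterlim khat at_top sequentially
         \<and> (\<lambda>n. khat n / sqrt (real n)) \<longlonglongrightarrow> 0
         \<and> (\<forall>\<^sub>F n in sequentially. gam n (p n) (khat n) = 0)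
         \<and> (\<forall>k' :: nat \<Rightarrow> real. filterlim k' at_top sequentially
               \<longrightarrow> (\<lambda>n. k' n / sqrt (real n)) \<longlonglongrightarrow> 0
               \<longrightarrow> (\<forall>\<^sub>F n in sequentially. gam n (p n) (k' n) = 0)
               \<longrightarrow> (\<forall>\<^sub>F n in sequentially. k' n = khat n))
         \<and> (\<lambda>n. khat n - (2 * log (1 / (1 - p n)) (exp 1 * real n * p n)
                  + 3 * ln (p n) / (2 * ln (real n * p n)) + 3)) \<longlonglongrightarrow> 0"
    (is "\<exists>khat. ?P khat")
    proof -
      define t where "t n = 2 * AA n (p n) / LL (p n) + 3 + 3 * ln (p n) / (2 * ln (real n * p n))" for n
      define khat where "khat n = (if \<exists>r. 1 \<le> r \<and> gam n (p n) r = 0 then (SOME r. 1 \<le> r \<and> gam n (p n) r = 0) else 0)" for n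
      have B: "\<forall>\<^sub>F n in sequentially. 2 \<le> n \<and> 0 < p n \<and> p n < 1 \<and> 0 < LL (p n) \<and> p n \<le> LL (p n)
        \<and> 1 + 3/4 * ln (real n) \<le> AA n (p n) \<and> AA n (p n) \<le> 1 + ln (real n)
        \<and> 3 * ln (p n) / (2 * ln (real n * p n)) \<le> 0
        \<and> -1/2 \<le> 3 * ln (p n) / (2 * ln (real n * p n))
        \<and> ln (exp 1 * real n * p n) = AA n (p n) \<and> 1 / p n \<le> real n powr (1/4)"
        by (rule basics[OF p0 low4 pos])
      have lnlim: "filterlim (\<lambda>n::nat. 1 + 3/4 * ln (real n)) at_top sequentially" by real_asymp
      have Alim: "filterlim (\<lambda>n. AA n (p n)) at_top sequentially"
        by (rule filterlim_at_top_mono[OF lnlim]) (use B in \<open>auto elim: eventually_mono\<close>)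
      have A5: "\<forall>\<^sub>F n in sequentially. 5 \<le> AA n (p n)" using Alim by (simp add: filterlim_at_top)
      define c where "c = exp (- (ln (2*pi)/2 + 2))"
      have c0: "c > 0" unfolding c_def by simp
      have pc: "\<forall>\<^sub>F n in sequentially. p n < c" by (rule order_tendstoD(2)[OF p0 c0])
      have ph: "\<forall>\<^sub>F n in sequentially. p n < 1/2" by (rule order_tendstoD(2)[OF p0]) simp
      have G: "\<forall>\<^sub>F n in sequentially. 2 \<le> n \<and> 0 < p n \<and> p n < 1 \<and> 0 < LL (p n) \<and> p n \<le> LL (p n)
        \<and> 1 + 3/4 * ln (real n) \<le> AA n (p n) \<and> AA n (p n) \<le> 1 + ln (real n)
        \<and> 3 * ln (p n) / (2 * ln (real n * p n)) \<le> 0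
        \<and> -1/2 \<le> 3 * ln (p n) / (2 * ln (real n * p n))
        \<and> ln (exp 1 * real n * p n) = AA n (p n) \<and> 1 / p n \<le> real n powr (1/4)
        \<and> 5 \<le> AA n (p n) + LL (p n) \<and> 0 < - ln (2*pi)/2 - ln (p n) - LL (p n) \<and> LL (p n) \<le> 1
        \<and> 5 \<le> AA n (p n)"
        using B A5 pc ph
      proof eventually_elim
        case (elim n)
        have L1: "LL (p n) \<le> 1" using elim by (intro LL_le1) auto
        have "ln (p n) < ln c" using elim c0 by (subst ln_less_cancel_iff) auto
        then have "ln (p n) < - (ln (2*pi)/2 + 2)" unfolding c_def by simp
        then have "0 < - ln (2*pi)/2 - ln (p n) - LL (p n)" using L1 by linarith
        moreover have "5 \<le> AA n (p n) + LL (p n)" using elim by linarith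
        ultimately show ?case using elim L1 by blast
      qed
      have key: "\<forall>\<^sub>F n in sequentially. 1 \<le> khat n \<and> gam n (p n) (khat n) = 0 \<and> \<bar>khat n - t n\<bar> \<le> \<delta>"
        if d: "0 < \<delta>" "\<delta> \<le> 1" for \<delta>
      proof -
        have l1: "(\<lambda>n. gam n (p n) (t n + \<delta>) / AA n (p n)) \<longlonglongrightarrow> - \<delta>"
          using asym[OF p0 low4 pos, of \<delta>] d unfolding t_def by simp
        have l2: "(\<lambda>n. gam n (p n) (t n + - \<delta>) / AA n (p n)) \<longlonglongrightarrow> - (- \<delta>)"
          using asym[OF p0 low4 pos, of "- \<delta>"] d unfolding t_def by simp
        have e1: "\<forall>\<^sub>F n in sequentially. gam n (p n) (t n + \<delta>) / AA n (p n) < 0"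
          by (rule order_tendstoD(2)[OF l1]) (use d in simp)
        have e2: "\<forall>\<^sub>F n in sequentially. 0 < gam n (p n) (t n + - \<delta>) / AA n (p n)"
          by (rule order_tendstoD(1)[OF l2]) (use d in simp)
        show ?thesis using G e1 e2
        proof eventually_elim
          case (elim n)
          have A0: "AA n (p n) > 0" using elim by linarith
          have L0: "LL (p n) > 0" using elim by blast
          have g1: "gam n (p n) (t n + \<delta>) < 0" using elim(2) A0 by (simp add: divide_less_0_iff)
          have g2: "0 < gam n (p n) (t n - \<delta>)" using elim(3) A0 by (simp add: zero_less_divide_iff)
          have AL: "0 < 2 * AA n (p n) / LL (p n)" using A0 L0 by simp
          have tl: "1 \<le> t n - \<delta>" unfolding t_def using AL elim d by linarith
          obtain r where r: "t n - \<delta> \<le> r" "r \<le> t n + \<delta>" "gam n (p n) r = 0"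
            using root_exists[of "t n - \<delta>" "t n + \<delta>" n "p n"] g1 g2 tl d by auto
          have ex: "\<exists>r. 1 \<le> r \<and> gam n (p n) r = 0" using r tl by (intro exI[of _ r]) auto
          then have kh: "1 \<le> khat n \<and> gam n (p n) (khat n) = 0"
            unfolding khat_def using someI_ex[OF ex] by simp
          have "khat n = r"
            using unique_root[of "p n" n "khat n" r] elim kh r tl by auto
          then show ?case using kh r by auto
        qed
      qed
      have k1: "\<forall>\<^sub>F n in sequentially. 1 \<le> khat n \<and> gam n (p n) (khat n) = 0 \<and> \<bar>khat n - t n\<bar> \<le> 1"
        using key[of 1] by simp
      have P1: "filterlim khat at_top sequentially"
      proof (rule filterlim_at_top_mono[OF Alim])
        show "\<forall>\<^sub>F n in sequentially. AA n (p n) \<le> khat n" using G k1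
        proof eventually_elim
          case (elim n)
          have A0: "AA n (p n) > 0" using elim by linarith
          have L0: "LL (p n) > 0" "LL (p n) \<le> 1" using elim by blast+
          have "AA n (p n) / 1 \<le> AA n (p n) / LL (p n)" using A0 L0 by (intro divide_left_mono) auto
          moreover have "2 * AA n (p n) / LL (p n) = 2 * (AA n (p n) / LL (p n))" by simp
          moreover have "5 \<le> AA n (p n)" using elim by blast
          ultimately have "AA n (p n) \<le> 2 * AA n (p n) / LL (p n) - 1/2" by linarith
          moreover have "-1/2 \<le> 3 * ln (p n) / (2 * ln (real n * p n))" using elim by blast
          moreover have "\<bar>khat n - t n\<bar> \<le> 1" using elim by blast
          ultimately show ?case using elim unfolding t_def by linarith
        qed
      qed
      have P2: "(\<lambda>n. khat n / sqrt (real n)) \<longlonglongrightarrow> 0"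
      proof (rule tendsto_sandwich)
        show "\<forall>\<^sub>F n in sequentially. 0 \<le> khat n / sqrt (real n)" using k1 by eventually_elim auto
        show "\<forall>\<^sub>F n in sequentially. khat n / sqrt (real n) \<le> (2 * ((1 + ln (real n)) * real n powr (1/4)) + 4) / sqrt (real n)"
          using G k1
        proof eventually_elim
          case (elim n)
          have A0: "AA n (p n) > 0" using elim by linarith
          have p0': "p n > 0" "p n \<le> LL (p n)" using elim by blast+
          have "AA n (p n) / LL (p n) \<le> AA n (p n) / p n" using A0 p0' by (intro divide_left_mono) auto
          also have "\<dots> = AA n (p n) * (1 / p n)" by simp
          also have "\<dots> \<le> (1 + ln (real n)) * real n powr (1/4)"
            using elim A0 by (intro mult_mono) auto
          finally have AL: "AA n (p n) / LL (p n) \<le> (1 + ln (real n)) * real n powr (1/4)" .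
          have "khat n \<le> t n + 1" using elim by linarith
          also have "\<dots> \<le> 2 * ((1 + ln (real n)) * real n powr (1/4)) + 4"
            unfolding t_def using AL elim by linarith
          finally have "khat n \<le> 2 * ((1 + ln (real n)) * real n powr (1/4)) + 4" .
          then show ?case using elim by (intro divide_right_mono) auto
        qed
        show "(\<lambda>n::nat. (2 * ((1 + ln (real n)) * real n powr (1/4)) + 4) / sqrt (real n)) \<longlonglongrightarrow> 0"
          by real_asymp
      qed simp
      have P3: "\<forall>\<^sub>F n in sequentially. gam n (p n) (khat n) = 0" using k1 by eventually_elim auto
      have P4: "\<forall>k' :: nat \<Rightarrow> real. filterlim k' at_top sequentially
               \<longrightarrow> (\<lambda>n. k' n / sqrt (real n)) \<longlonglongrightarrow> 0
               \<longrightarrow> (\<forall>\<^sub>F n in sequentially. gam n (p n) (k' n) = 0)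
               \<longrightarrow> (\<forall>\<^sub>F n in sequentially. k' n = khat n)"
      proof (intro allI impI)
        fix k' :: "nat \<Rightarrow> real"
        assume a1: "filterlim k' at_top sequentially" and a3: "\<forall>\<^sub>F n in sequentially. gam n (p n) (k' n) = 0"
        have "\<forall>\<^sub>F n in sequentially. 1 \<le> k' n" using a1 by (simp add: filterlim_at_top)
        then show "\<forall>\<^sub>F n in sequentially. k' n = khat n" using a3 G k1
        proof eventually_elim
          case (elim n)
          then show ?case using unique_root[of "p n" n "k' n" "khat n"] by auto
        qed
      qed
      have P5: "(\<lambda>n. khat n - (2 * log (1 / (1 - p n)) (exp 1 * real n * p n)
                  + 3 * ln (p n) / (2 * ln (real n * p n)) + 3)) \<longlonglongrightarrow> 0"
      proof (rule tendstoI)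
        fix e :: real assume e: "e > 0"
        have "\<forall>\<^sub>F n in sequentially. 1 \<le> khat n \<and> gam n (p n) (khat n) = 0 \<and> \<bar>khat n - t n\<bar> \<le> min (e/2) 1"
          using e by (intro key) auto
        then show "\<forall>\<^sub>F n in sequentially. dist (khat n - (2 * log (1 / (1 - p n)) (exp 1 * real n * p n)
                  + 3 * ln (p n) / (2 * ln (real n * p n)) + 3)) 0 < e"
          using G
        proof eventually_elim
          case (elim n)
          have l1: "ln (1 / (1 - p n)) = LL (p n)" unfolding LL_def using elim by (simp add: ln_div)
          have "log (1 / (1 - p n)) (exp 1 * real n * p n) = AA n (p n) / LL (p n)"
            unfolding log_def l1 using elim by simp
          then have "2 * log (1 / (1 - p n)) (exp 1 * real n * p n) + 3 * ln (p n) / (2 * ln (real n * p n)) + 3 = t n"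
            unfolding t_def by simp
          then show ?case using elim e by (simp add: dist_real_def)
        qed
      qed
      show ?thesis using P1 P2 P3 P4 P5 by blast
    qed
  qed
qed

end
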